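(* In the setting described in the context, there is a constant $C$ independent of $\epsilon\in(0,1)$ such that for every $t\ge0$, $$\int_{-\pi}^{\pi}\int_{-\pi}^{\pi}|X^\epsilon(x,y,t)|\,dx\,dy\le\int_{-\pi}^{\pi}\int_{-\pi}^{\pi}|\rho_0^\epsilon(x,y)|\,dx\,dy\le C.$$
   Context: Let $\mathcal{C}_b(\mathbb{R}^2)$ be the Banach space of bounded continuous real functions on $\mathbb{R}^2$ with sup norm; for real $u$, $u^+=\max(0,u)$, $u^-=\max(0,-u)$. For $0<\epsilon<1$ let $u^\epsilon,v^\epsilon:\mathbb{R}^2\times[0,\infty)\to\mathbb{R}$ be $2\pi$-periodic in $x$ and in $y$, with $t\mapsto u^\epsilon(\cdot,\cdot,t),v^\epsilon(\cdot,\cdot,t)$ continuous into $\mathcal{C}_b(\mathbb{R}^2)$ and bounded uniformly in $\epsilon,x,y,t$. Let $\rho_0^\epsilon\in\mathcal{C}_b(\mathbb{R}^2)$ be $2\pi$-periodic in each variable with $\sup_\epsilon\int_{[-\pi,\pi]^2}|\rho_0^\epsilon|<\infty$. Let $X^\epsilon$ be the global $\mathcal{C}^1$ solution $[0,\infty)\to\mathcal{C}_b(\mathbb{R}^2)$ of $X^\epsilon(x,y,0)=\rho_0^\epsilon(x,y)$ and $$\frac{d}{dt}X^\epsilon(x,y,t)=\frac1\epsilon\big[(X^\epsilon u^{\epsilon+})(x-\epsilon,y,t)-(X^\epsilon|u^\epsilon|)(x,y,t)+(X^\epsilon u^{\epsilon-})(x+\epsilon,y,t)+(X^\epsilon v^{\epsilon+})(x,y-\epsilon,t)-(X^\epsilon|v^\epsilon|)(x,y,t)+(X^\epsilon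 v^{\epsilon-})(x,y+\epsilon,t)\big].$$ *)

theory Defs
  imports "HOL-Analysis.Analysis"
begin

end

theory Submission
  imports Defs
begin


lemma Q_eq: "{-pi..pi} \<times> {-pi..pi} = cbox (-pi,-pi) (pi::real,pi::real)"
  by (simp add: cbox_Pair_eq)

lemma fub1:
  fixes f :: "real \<times> real \<Rightarrow> real"
  assumes "continuous_on UNIV f"
  shows "integral ({-pi..pi} \<times> {-pi..pi}) f = integral {-pi..pi} (\<lambda>x. integral {-pi..pi} (\<lambda>y. f (x,y)))"
proof -
  have c: "continuous_on (cbox (-pi,-pi) (pi,pi)) f" using assms continuous_on_subset by blast
  show ?thesis unfolding Q_eq using integral_prod_continuous[OF c] by simp
qed

lemma fub2:
  fixes f :: "real \<times> real \<Rightarrow> real"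
  assumes "continuous_on UNIV f"
  shows "integral ({-pi..pi} \<times> {-pi..pi}) f = integral {-pi..pi} (\<lambda>y. integral {-pi..pi} (\<lambda>x. f (x,y)))"
proof -
  have c: "continuous_on (cbox (-pi,-pi) (pi,pi)) (\<lambda>(x,y). f (x,y))" using assms continuous_on_subset by fastforce
  have "integral {-pi..pi} (\<lambda>x. integral {-pi..pi} (\<lambda>y. f (x,y))) = integral {-pi..pi} (\<lambda>y. integral {-pi..pi} (\<lambda>x. f (x,y)))"
    using integral_swap_continuous[where f="\<lambda>x y. f (x,y)", OF c] by simp
  then show ?thesis using fub1[OF assms] by simp
qed

lemma per1_pos:
  fixes g :: "real \<Rightarrow> real"
  assumes cg: "continuous_on UNIV g" and pg: "\<And>x. g (x + 2*pi) = g x" and c: "0 \<le> c" "c \<le> 2*pi"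
  shows "integral {-pi..pi} (\<lambda>x. g (x + c)) = integral {-pi..pi} g"
proof -
  have ig: "g integrable_on {a..b}" for a b using cg continuous_on_subset integrable_continuous_real by blast
  have "integral {-pi..pi} (\<lambda>x. g (x + c)) = integral {-pi+c..pi+c} g"
    using integral_shift_real_ivl[of "-pi+c" c "pi+c" g] by simp
  also have "\<dots> = integral {-pi+c..pi} g + integral {pi..pi+c} g"
    using Henstock_Kurzweil_Integration.integral_combine[where a="-pi+c" and c=pi and b="pi+c" and f=g] c ig by simp
  also have "integral {pi..pi+c} g = integral {-pi..-pi+c} (\<lambda>x. g (x + 2*pi))"
    using integral_shift_real_ivl[of pi "2*pi" "pi+c" g] by (simp add: algebra_simps)
  also have "\<dots> = integral {-pi..-pi+c} g" using pg by simp
  also have "integral {-pi+c..pi} g + integral {-pi..-pi+c} g = integral {-pi..pi} g"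
    using Henstock_Kurzweil_Integration.integral_combine[where a="-pi" and c="-pi+c" and b=pi and f=g] c ig by simp
  finally show ?thesis .
qed

lemma per1:
  fixes g :: "real \<Rightarrow> real"
  assumes cg: "continuous_on UNIV g" and pg: "\<And>x. g (x + 2*pi) = g x" and c: "\<bar>c\<bar> \<le> 2*pi"
  shows "integral {-pi..pi} (\<lambda>x. g (x + c)) = integral {-pi..pi} g"
proof (cases "c \<ge> 0")
  case True then show ?thesis using per1_pos[OF cg pg] c by simp
next
  case False
  have "g (x + c) = g (x + (c + 2*pi))" for x using pg[of "x+c"] by (simp add: algebra_simps)
  then have "integral {-pi..pi} (\<lambda>x. g (x + c)) = integral {-pi..pi} (\<lambda>x. g (x + (c + 2*pi)))" by simp
  also have "\<dots> = integral {-pi..pi} g" using per1_pos[OF cg pg, of "c+2*pi"] c False by simp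
  finally show ?thesis .
qed

lemma shift_x:
  fixes f :: "real \<times> real \<Rightarrow> real"
  assumes cf: "continuous_on UNIV f" and pf: "\<And>x y. f (x + 2*pi, y) = f (x, y)" and c: "\<bar>c\<bar> \<le> 2*pi"
  shows "integral ({-pi..pi} \<times> {-pi..pi}) (\<lambda>p. f (fst p + c, snd p)) = integral ({-pi..pi} \<times> {-pi..pi}) f"
proof -
  have cf2: "continuous_on UNIV (\<lambda>p. f (fst p + c, snd p))"
    by (intro continuous_on_compose2[OF cf] continuous_intros) auto
  have cy: "continuous_on UNIV (\<lambda>x. f (x, y))" for y
    by (intro continuous_on_compose2[OF cf] continuous_intros) auto
  show ?thesis unfolding fub2[OF cf2] fub2[OF cf]
    using per1[OF cy, of y c for y] pf c by simp
qed

lemma shift_y: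
  fixes f :: "real \<times> real \<Rightarrow> real"
  assumes cf: "continuous_on UNIV f" and pf: "\<And>x y. f (x, y + 2*pi) = f (x, y)" and c: "\<bar>c\<bar> \<le> 2*pi"
  shows "integral ({-pi..pi} \<times> {-pi..pi}) (\<lambda>p. f (fst p, snd p + c)) = integral ({-pi..pi} \<times> {-pi..pi}) f"
proof -
  have cf2: "continuous_on UNIV (\<lambda>p. f (fst p, snd p + c))"
    by (intro continuous_on_compose2[OF cf] continuous_intros) auto
  have cy: "continuous_on UNIV (\<lambda>y. f (x, y))" for x
    by (intro continuous_on_compose2[OF cf] continuous_intros) auto
  show ?thesis unfolding fub1[OF cf2] fub1[OF cf]
    using per1[OF cy, of x c for x] pf c by simp
qed



lemma dini_mono:
  fixes \<phi> :: "real \<Rightarrow> real"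
  assumes cont: "continuous_on {0..} \<phi>"
    and dini: "\<And>t \<delta>. t \<ge> 0 \<Longrightarrow> \<delta> > 0 \<Longrightarrow> \<exists>h0>0. \<forall>h. 0 < h \<and> h < h0 \<longrightarrow> \<phi> (t + h) \<le> \<phi> t + \<delta> * h"
    and T: "T \<ge> 0"
  shows "\<phi> T \<le> \<phi> 0"
proof (rule ccontr)
  assume neg: "\<not> \<phi> T \<le> \<phi> 0"
  define \<delta> where "\<delta> = (\<phi> T - \<phi> 0) / (4 * (T + 1))"
  have dpos: "\<delta> > 0" using neg T unfolding \<delta>_def by (simp add: field_simps)
  define S where "S = {r \<in> {0..T}. \<phi> r - \<phi> 0 - 2*\<delta>*r \<le> 0}"
  have cl: "closed S" unfolding S_def
    by (rule continuous_on_closed_Collect_le) (auto intro!: continuous_intros continuous_on_subset[OF cont])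
  have "S \<subseteq> {0..T}" unfolding S_def by auto
  then have "bounded S" using bounded_subset[OF compact_imp_bounded[OF compact_Icc]] by blast
  then have "compact S" using cl compact_eq_bounded_closed by blast
  moreover have "0 \<in> S" using T unfolding S_def by simp
  ultimately obtain s0 where s0: "s0 \<in> S" "\<And>s. s \<in> S \<Longrightarrow> s \<le> s0"
    using compact_attains_sup[of S] by blast
  have "s0 < T"
  proof (rule ccontr)
    assume "\<not> s0 < T"
    then have "s0 = T" using s0 unfolding S_def by auto
    then have "\<phi> T - \<phi> 0 \<le> 2*\<delta>*T" using s0 unfolding S_def by auto
    moreover have "2*\<delta>*T < \<phi> T - \<phi> 0" proof -
      have "0 < (\<phi> T - \<phi> 0) * (4 + 2*T)" using neg T by (intro mult_pos_pos) auto
      then show ?thesis using T unfolding \<delta>_def by (simp add: field_simps)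
    qed
    ultimately show False by simp
  qed
  have s00: "s0 \<ge> 0" using s0 unfolding S_def by auto
  obtain h0 where h0: "h0 > 0" "\<And>h. 0 < h \<and> h < h0 \<Longrightarrow> \<phi> (s0 + h) \<le> \<phi> s0 + \<delta> * h"
    using dini[OF s00 dpos] by blast
  define h where "h = min (h0/2) (T - s0)"
  have hp: "0 < h" "h < h0" "s0 + h \<le> T" using h0 \<open>s0 < T\<close> unfolding h_def by auto
  have "\<phi> (s0 + h) - \<phi> 0 - 2*\<delta>*(s0+h) \<le> \<phi> s0 + \<delta> * h - \<phi> 0 - 2*\<delta>*(s0+h)" using h0(2) hp by simp
  also have "\<dots> \<le> (\<phi> s0 - \<phi> 0 - 2*\<delta>* s0) - \<delta>*h" by (simp add: algebra_simps)
  also have "\<dots> \<le> 0" using s0 mult_pos_pos[OF dpos hp(1)] unfolding S_def by simp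
  finally have "s0 + h \<in> S" using hp s00 unfolding S_def by simp
  then show False using s0(2) hp by fastforce
qed



lemma apply_bcontfun_cont[continuous_intros]:
  "continuous_on S g \<Longrightarrow> continuous_on S (\<lambda>x. apply_bcontfun f (g x))"
  by (rule continuous_on_compose2[OF continuous_on_apply_bcontfun]) auto

definition shiftd :: "real \<times> real \<Rightarrow> ((real \<times> real) \<Rightarrow>\<^sub>C real) \<Rightarrow> ((real \<times> real) \<Rightarrow>\<^sub>C real)" where
  "shiftd s f = Bcontfun (\<lambda>p. apply_bcontfun f (p + s) - apply_bcontfun f p)"

lemma shiftd_apply: "apply_bcontfun (shiftd s f) p = apply_bcontfun f (p + s) - apply_bcontfun f p"
proof -
  have "(\<lambda>p. apply_bcontfun f (p + s) - apply_bcontfun f p) \<in> bcontfun"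
  proof (rule bcontfun_normI)
    show "continuous_on UNIV (\<lambda>p. apply_bcontfun f (p + s) - apply_bcontfun f p)"
      by (intro continuous_intros)
    show "norm (apply_bcontfun f (x + s) - apply_bcontfun f x) \<le> 2 * norm f" for x
      using norm_bounded[of f "x+s"] norm_bounded[of f x] norm_triangle_ineq4[of "apply_bcontfun f (x + s)" "apply_bcontfun f x"] by linarith
  qed
  then show ?thesis unfolding shiftd_def by (simp add: Bcontfun_inverse)
qed

lemma shiftd_lip: "dist (shiftd s f) (shiftd s g) \<le> 2 * dist f g"
  unfolding dist_norm
proof (rule norm_bound)
  fix x
  have "norm (apply_bcontfun (f - g) (x + s)) \<le> norm (f - g)" "norm (apply_bcontfun (f - g) x) \<le> norm (f - g)"
    by (rule norm_bounded)+
  then show "norm (apply_bcontfun (shiftd s f - shiftd s g) x) \<le> 2 * norm (f - g)"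
    by (simp add: shiftd_apply)
qed

lemma shiftd_cont: "continuous_on S (shiftd s)"
  by (rule lipschitz_on_continuous_on[of 2]) (auto intro!: lipschitz_onI shiftd_lip)

lemma intQ: fixes f :: "real \<times> real \<Rightarrow> real"
  assumes "continuous_on UNIV f" shows "f integrable_on ({-pi..pi} \<times> {-pi..pi})"
proof -
  have "{-pi..pi} \<times> {-pi..pi} = cbox (-pi,-pi) (pi::real,pi::real)" by (simp add: cbox_Pair_eq)
  then show ?thesis using integrable_continuous[of "(-pi,-pi)" "(pi,pi)" f] assms continuous_on_subset by fastforce
qed

lemma intQ_const: "integral ({-pi..pi} \<times> {-pi..pi}) (\<lambda>p::real\<times>real. c) = 4*pi^2*c"
proof -
  have "{-pi..pi} \<times> {-pi..pi} = cbox (-pi,-pi) (pi::real,pi::real)" by (simp add: cbox_Pair_eq)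
  then show ?thesis by (simp add: content_Pair power2_eq_square)
qed

definition L1 :: "((real \<times> real) \<Rightarrow>\<^sub>C real) \<Rightarrow> real" where
  "L1 f = integral ({-pi..pi} \<times> {-pi..pi}) (\<lambda>p. \<bar>apply_bcontfun f p\<bar>)"

lemma L1_le: "L1 f \<le> L1 g + 4*pi^2 * dist f g"
proof -
  have "L1 f \<le> integral ({-pi..pi} \<times> {-pi..pi}) (\<lambda>p. \<bar>apply_bcontfun g p\<bar> + dist f g)"
    unfolding L1_def
  proof (rule integral_le)
    show "(\<lambda>p. \<bar>apply_bcontfun f p\<bar>) integrable_on {-pi..pi} \<times> {-pi..pi}"
      by (intro intQ continuous_intros)
    show "(\<lambda>p. \<bar>apply_bcontfun g p\<bar> + dist f g) integrable_on {-pi..pi} \<times> {-pi..pi}"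
      by (intro intQ continuous_intros)
    fix x
    have "norm (apply_bcontfun (f - g) x) \<le> norm (f - g)" by (rule norm_bounded)
    then show "\<bar>apply_bcontfun f x\<bar> \<le> \<bar>apply_bcontfun g x\<bar> + dist f g"
      by (simp add: dist_norm)
  qed
  also have "\<dots> = L1 g + 4*pi^2 * dist f g"
    unfolding L1_def
    by (subst integral_add) (auto intro!: intQ continuous_intros simp: intQ_const)
  finally show ?thesis .
qed

lemma L1_cont: "continuous_on S L1"
proof (rule lipschitz_on_continuous_on[of "4*pi^2"], rule lipschitz_onI)
  fix f g
  show "dist (L1 f) (L1 g) \<le> 4 * pi\<^sup>2 * dist f g"
    using L1_le[of f g] L1_le[of g f] by (simp add: dist_real_def dist_commute abs_le_iff)
qed simp



lemma bnd6:
  fixes Y0 Y1 Y2 Y3 Y4 m1 m2 m3 m4 c1 c2 :: real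
  assumes "\<bar>Y0\<bar> \<le> N" "\<bar>Y1\<bar> \<le> N" "\<bar>Y2\<bar> \<le> N" "\<bar>Y3\<bar> \<le> N" "\<bar>Y4\<bar> \<le> N"
    "\<bar>m1\<bar> \<le> M" "\<bar>m2\<bar> \<le> M" "\<bar>m3\<bar> \<le> M" "\<bar>m4\<bar> \<le> M" "\<bar>c1\<bar> \<le> M" "\<bar>c2\<bar> \<le> M"
  shows "\<bar>Y1*m1 - Y0*c1 + Y2*m2 + Y3*m3 - Y0*c2 + Y4*m4\<bar> \<le> 6*M*N"
proof -
  have k: "\<bar>a*b\<bar> \<le> N*M" if "\<bar>a\<bar> \<le> N" "\<bar>b\<bar> \<le> M" for a b :: real
    unfolding abs_mult using that by (intro mult_mono) auto
  have "\<bar>Y1*m1 - Y0*c1 + Y2*m2 + Y3*m3 - Y0*c2 + Y4*m4\<bar> \<le>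
        \<bar>Y1*m1\<bar> + \<bar>Y0*c1\<bar> + \<bar>Y2*m2\<bar> + \<bar>Y3*m3\<bar> + \<bar>Y0*c2\<bar> + \<bar>Y4*m4\<bar>" by linarith
  also have "\<dots> \<le> 6*(N*M)" using k assms by (smt (verit))
  finally show ?thesis by (simp add: algebra_simps)
qed

lemma X_periodic:
  fixes u v X D :: "real \<Rightarrow> (real \<times> real) \<Rightarrow>\<^sub>C real" and r0 :: "(real \<times> real) \<Rightarrow>\<^sub>C real"
  assumes e: "0 < e" and M: "\<forall>t\<ge>0. \<forall>x y. \<bar>u t (x,y)\<bar> \<le> M \<and> \<bar>v t (x,y)\<bar> \<le> M"
  and pu: "\<forall>t\<ge>0. \<forall>x y. u t (x + fst s, y + snd s) = u t (x,y) \<and> v t (x + fst s, y + snd s) = v t (x,y)"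
  and pr: "\<forall>x y. r0 (x + fst s, y + snd s) = r0 (x,y)"
  and X0: "X 0 = r0"
  and Xd: "\<forall>t\<ge>0. (X has_vector_derivative D t) (at t within {0..})"
  and Deq: "\<forall>t\<ge>0. \<forall>x y.
      apply_bcontfun (D t) (x, y) = (1/e) *
        ( apply_bcontfun (X t) (x - e, y) * max 0 (apply_bcontfun (u t) (x - e, y))
        - apply_bcontfun (X t) (x, y) * \<bar>apply_bcontfun (u t) (x, y)\<bar>
        + apply_bcontfun (X t) (x + e, y) * max 0 (- apply_bcontfun (u t) (x + e, y))
        + apply_bcontfun (X t) (x, y - e) * max 0 (apply_bcontfun (v t) (x, y - e))
        - apply_bcontfun (X t) (x, y) * \<bar>apply_bcontfun (v t) (x, y)\<bar>
        + apply_bcontfun (X t) (x, y + e) * max 0 (- apply_bcontfun (v t) (x, y + e)))"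
  shows "\<forall>t\<ge>0. \<forall>x y. X t (x + fst s, y + snd s) = X t (x,y)"
proof -
  obtain a b where s: "s = (a,b)" by fastforce
  define K where "K = 6*M/e"
  have M0: "M \<ge> 0" using M by (meson abs_ge_zero order_trans order_refl)
  have K0: "K \<ge> 0" unfolding K_def using M0 e by simp
  define Y where "Y t = shiftd s (X t)" for t
  have Yap: "Y t (x,y) = X t (x+a,y+b) - X t (x,y)" for t x y
    unfolding Y_def shiftd_apply s by simp
  have Ybd: "\<bar>Y t q\<bar> \<le> norm (Y t)" for t q using norm_bounded[of "Y t" q] by simp
  have Dd: "\<bar>D t (x+a,y+b) - D t (x,y)\<bar> \<le> K * norm (Y t)" if t: "t \<ge> 0" for t x y
  proof -
    have uu: "u t (x+a-e,y+b) = u t (x-e,y)" "u t (x+a+e,y+b) = u t (x+e,y)" "u t (x+a,y+b) = u t (x,y)"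
      "v t (x+a,y+b-e) = v t (x,y-e)" "v t (x+a,y+b+e) = v t (x,y+e)" "v t (x+a,y+b) = v t (x,y)"
      using pu[rule_format, OF t, of "x-e" y] pu[rule_format, OF t, of "x+e" y] pu[rule_format, OF t, of x y]
        pu[rule_format, OF t, of x "y-e"] pu[rule_format, OF t, of x "y+e"]
      by (simp_all add: s algebra_simps)
    have yy: "X t (x+a-e,y+b) = Y t (x-e,y) + X t (x-e,y)" "X t (x+a+e,y+b) = Y t (x+e,y) + X t (x+e,y)"
      "X t (x+a,y+b) = Y t (x,y) + X t (x,y)"
      "X t (x+a,y+b-e) = Y t (x,y-e) + X t (x,y-e)" "X t (x+a,y+b+e) = Y t (x,y+e) + X t (x,y+e)"
      by (simp_all add: Yap algebra_simps)
    have eq: "D t (x+a,y+b) - D t (x,y) = (1/e) *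
        (Y t (x-e,y) * max 0 (u t (x-e,y)) - Y t (x,y) * \<bar>u t (x,y)\<bar> + Y t (x+e,y) * max 0 (- u t (x+e,y))
         + Y t (x,y-e) * max 0 (v t (x,y-e)) - Y t (x,y) * \<bar>v t (x,y)\<bar> + Y t (x,y+e) * max 0 (- v t (x,y+e)))"
    proof -
      note D1 = Deq[rule_format, OF t, of "x+a" "y+b", unfolded uu yy]
      note D0 = Deq[rule_format, OF t, of x y]
      show ?thesis unfolding D1 D0 by (simp add: algebra_simps)
    qed
    have Mb: "\<bar>u t q\<bar> \<le> M" "\<bar>v t q\<bar> \<le> M" for q using M t by (cases q; auto)+
    have "\<bar>Y t (x-e,y) * max 0 (u t (x-e,y)) - Y t (x,y) * \<bar>u t (x,y)\<bar> + Y t (x+e,y) * max 0 (- u t (x+e,y))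
         + Y t (x,y-e) * max 0 (v t (x,y-e)) - Y t (x,y) * \<bar>v t (x,y)\<bar> + Y t (x,y+e) * max 0 (- v t (x,y+e))\<bar>
         \<le> 6 * M * norm (Y t)"
      by (rule bnd6) (use Ybd Mb M0 in \<open>auto simp: abs_le_iff\<close>)
    then show ?thesis unfolding eq K_def using e by (simp add: abs_mult divide_le_eq_1 field_simps)
  qed
  define \<phi> where "\<phi> t = exp (-K*t) * norm (Y t)" for t
  have Xc: "continuous_on {0..} X"
    unfolding continuous_on_eq_continuous_within
  proof
    fix t :: real assume "t \<in> {0..}"
    then show "continuous (at t within {0..}) X"
      using Xd by (intro has_vector_derivative_continuous[of X "D t"]) auto
  qed
  have Yc: "continuous_on {0..} Y" unfolding Y_def
    by (rule continuous_on_compose2[OF shiftd_cont[of UNIV s] Xc]) auto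
  have \<phi>c: "continuous_on {0..} \<phi>" unfolding \<phi>_def by (intro continuous_intros Yc)
  have dini: "\<exists>h0>0. \<forall>h. 0 < h \<and> h < h0 \<longrightarrow> \<phi> (t + h) \<le> \<phi> t + \<delta> * h"
    if t: "t \<ge> 0" and dp: "\<delta> > 0" for t \<delta>
  proof -
    have "(X has_derivative (\<lambda>h. h *\<^sub>R D t)) (at t within {0..})"
      using Xd t by (simp add: has_vector_derivative_def)
    then have "\<forall>e>0. \<exists>d>0. \<forall>y\<in>{0..}. norm (y - t) < d \<longrightarrow>
        norm (X y - X t - (y - t) *\<^sub>R D t) \<le> e * norm (y - t)"
      by (simp add: has_derivative_within_alt)
    then obtain d where d: "d > 0" "\<And>y. y \<in> {0..} \<Longrightarrow> norm (y - t) < d \<Longrightarrow>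
        norm (X y - X t - (y - t) *\<^sub>R D t) \<le> \<delta>/2 * norm (y - t)"
      using dp by (metis half_gt_zero)
    show ?thesis
    proof (intro exI[of _ d] conjI allI impI)
      show "d > 0" by fact
      fix h assume h: "0 < h \<and> h < d"
      define E where "E = X (t+h) - X t - h *\<^sub>R D t"
      have En: "norm E \<le> \<delta>/2 * h" using d(2)[of "t+h"] t h unfolding E_def by simp
      have Eq: "\<bar>E q\<bar> \<le> \<delta>/2 * h" for q using norm_bounded[of E q] En by simp
      have Xs: "X (t+h) q = X t q + h * D t q + E q" for q unfolding E_def by simp
      have Yn: "norm (Y (t+h)) \<le> (1 + K*h) * norm (Y t) + \<delta>*h"
      proof (rule norm_bound)
        fix p :: "real \<times> real"
        obtain x y where p: "p = (x,y)" by fastforce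
        have eqY: "Y (t+h) (x,y) = Y t (x,y) + h*(D t (x+a,y+b) - D t (x,y)) + (E (x+a,y+b) - E (x,y))"
          unfolding Yap Xs by (simp add: algebra_simps)
        have hb: "\<bar>h*(D t (x+a,y+b) - D t (x,y))\<bar> \<le> h*(K * norm (Y t))"
          unfolding abs_mult using h Dd[OF t, of x y] by (intro mult_mono) auto
        have "\<bar>Y (t+h) (x,y)\<bar> \<le> (1 + K*h) * norm (Y t) + \<delta>*h"
          unfolding eqY using hb Ybd[of t "(x,y)"] Eq[of "(x+a,y+b)"] Eq[of "(x,y)"]
          by (simp add: algebra_simps; smt (verit))
        then show "norm (Y (t+h) p) \<le> (1 + K*h) * norm (Y t) + \<delta>*h" using p by simp
      qed
      have e1: "exp (-K*h) * (1 + K*h) \<le> 1"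
      proof -
        have "1 + K*h \<le> exp (K*h)" by (rule exp_ge_add_one_self)
        then have "exp (-K*h) * (1 + K*h) \<le> exp (-K*h) * exp (K*h)" by (intro mult_left_mono) auto
        also have "\<dots> = 1" by (simp add: exp_minus field_simps)
        finally show ?thesis .
      qed
      have e2: "exp (-K*(t+h)) \<le> 1" using K0 t h by simp
      have "\<phi> (t+h) \<le> exp (-K*(t+h)) * ((1 + K*h) * norm (Y t) + \<delta>*h)"
        unfolding \<phi>_def by (intro mult_left_mono Yn) auto
      also have "\<dots> = exp (-K*t) * norm (Y t) * (exp (-K*h) * (1 + K*h)) + exp (-K*(t+h)) * (\<delta>*h)"
      proof -
        have ex: "exp (-K*(t+h)) = exp (-K*t) * exp (-K*h)"
          by (subst exp_add[symmetric]) (simp add: algebra_simps)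
        show ?thesis unfolding ex by (simp add: algebra_simps)
      qed
      also have "\<dots> \<le> exp (-K*t) * norm (Y t) * 1 + 1 * (\<delta>*h)"
        using e1 e2 dp h by (intro add_mono mult_left_mono mult_right_mono) auto
      finally show "\<phi> (t + h) \<le> \<phi> t + \<delta> * h" unfolding \<phi>_def by simp
    qed
  qed
  have Y0: "Y 0 = 0"
    by (rule bcontfun_eqI) (use pr in \<open>auto simp: Y_def shiftd_apply X0 s\<close>)
  show ?thesis
  proof (intro allI impI)
    fix t x y :: real assume t: "t \<ge> 0"
    have "\<phi> t \<le> \<phi> 0" by (rule dini_mono[OF \<phi>c dini t])
    also have "\<phi> 0 = 0" unfolding \<phi>_def Y0 by simp
    finally have "norm (Y t) \<le> 0" unfolding \<phi>_def by (simp add: mult_le_0_iff)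
    then have "\<bar>Y t (x,y)\<bar> \<le> 0" using Ybd[of t "(x,y)"] by linarith
    then show "X t (x + fst s, y + snd s) = X t (x,y)" unfolding Yap s by simp
  qed
qed



lemma tri4:
  fixes A w k X1 X2 X3 X4 m1 m2 m3 m4 :: real
  assumes "w \<ge> 0" "k \<ge> 0" "m1 \<ge> 0" "m2 \<ge> 0" "m3 \<ge> 0" "m4 \<ge> 0"
  shows "\<bar>A*w + k*(X1*m1+X2*m2+X3*m3+X4*m4)\<bar> \<le> \<bar>A\<bar>*w + k*(\<bar>X1\<bar>*m1+\<bar>X2\<bar>*m2+\<bar>X3\<bar>*m3+\<bar>X4\<bar>*m4)"
proof -
  have "\<bar>X1*m1+X2*m2+X3*m3+X4*m4\<bar> \<le> \<bar>X1\<bar>*m1+\<bar>X2\<bar>*m2+\<bar>X3\<bar>*m3+\<bar>X4\<bar>*m4"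
  proof -
    have "\<bar>X1*m1\<bar> = \<bar>X1\<bar>*m1" "\<bar>X2*m2\<bar> = \<bar>X2\<bar>*m2" "\<bar>X3*m3\<bar> = \<bar>X3\<bar>*m3" "\<bar>X4*m4\<bar> = \<bar>X4\<bar>*m4"
      using assms by (simp_all add: abs_mult)
    moreover have "\<bar>X1*m1+X2*m2+X3*m3+X4*m4\<bar> \<le> \<bar>X1*m1\<bar>+\<bar>X2*m2\<bar>+\<bar>X3*m3\<bar>+\<bar>X4*m4\<bar>"
      by (smt (verit) abs_triangle_ineq)
    ultimately show ?thesis by simp
  qed
  then have "\<bar>k*(X1*m1+X2*m2+X3*m3+X4*m4)\<bar> \<le> k*(\<bar>X1\<bar>*m1+\<bar>X2\<bar>*m2+\<bar>X3\<bar>*m3+\<bar>X4\<bar>*m4)"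
    using assms(2) unfolding abs_mult abs_of_nonneg[OF assms(2)] by (intro mult_left_mono) auto
  moreover have "\<bar>A*w\<bar> = \<bar>A\<bar>*w" using assms by (simp add: abs_mult)
  ultimately show ?thesis by (smt (verit) abs_triangle_ineq)
qed

lemma L1_mono:
  fixes u v X D :: "real \<Rightarrow> (real \<times> real) \<Rightarrow>\<^sub>C real"
  assumes e: "0 < e" "e < 1" and M: "\<forall>t\<ge>0. \<forall>x y. \<bar>u t (x,y)\<bar> \<le> M \<and> \<bar>v t (x,y)\<bar> \<le> M"
  and pu: "\<forall>t\<ge>0. \<forall>x y. u t (x + 2*pi, y) = u t (x,y) \<and> u t (x, y + 2*pi) = u t (x,y) \<and>
       v t (x + 2*pi, y) = v t (x,y) \<and> v t (x, y + 2*pi) = v t (x,y)"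
  and pX: "\<forall>t\<ge>0. \<forall>x y. X t (x + 2*pi, y) = X t (x,y) \<and> X t (x, y + 2*pi) = X t (x,y)"
  and Xd: "\<forall>t\<ge>0. (X has_vector_derivative D t) (at t within {0..})"
  and Deq: "\<forall>t\<ge>0. \<forall>x y.
      apply_bcontfun (D t) (x, y) = (1/e) *
        ( apply_bcontfun (X t) (x - e, y) * max 0 (apply_bcontfun (u t) (x - e, y))
        - apply_bcontfun (X t) (x, y) * \<bar>apply_bcontfun (u t) (x, y)\<bar>
        + apply_bcontfun (X t) (x + e, y) * max 0 (- apply_bcontfun (u t) (x + e, y))
        + apply_bcontfun (X t) (x, y - e) * max 0 (apply_bcontfun (v t) (x, y - e))
        - apply_bcontfun (X t) (x, y) * \<bar>apply_bcontfun (v t) (x, y)\<bar>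
        + apply_bcontfun (X t) (x, y + e) * max 0 (- apply_bcontfun (v t) (x, y + e)))"
  shows "\<forall>t\<ge>0. L1 (X t) \<le> L1 (X 0)"
proof -
  define Q :: "(real \<times> real) set" where "Q = {-pi..pi} \<times> {-pi..pi}"
  have M0: "M \<ge> 0" using M by (meson abs_ge_zero order_trans order_refl)
  have Xc: "continuous_on {0..} X"
    unfolding continuous_on_eq_continuous_within
  proof
    fix t :: real assume "t \<in> {0..}"
    then show "continuous (at t within {0..}) X"
      using Xd by (intro has_vector_derivative_continuous[of X "D t"]) auto
  qed
  have \<phi>c: "continuous_on {0..} (\<lambda>t. L1 (X t))"
    by (rule continuous_on_compose2[OF L1_cont[of UNIV] Xc]) auto
  have dini: "\<exists>h0>0. \<forall>h. 0 < h \<and> h < h0 \<longrightarrow> L1 (X (t + h)) \<le> L1 (X t) + \<delta> * h"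
    if t: "t \<ge> 0" and dp: "\<delta> > 0" for t \<delta>
  proof -
    define \<eta> where "\<eta> = \<delta> / (4*pi^2)"
    have \<eta>p: "\<eta> > 0" unfolding \<eta>_def using dp by simp
    have "(X has_derivative (\<lambda>h. h *\<^sub>R D t)) (at t within {0..})"
      using Xd t by (simp add: has_vector_derivative_def)
    then have "\<forall>e>0. \<exists>d>0. \<forall>y\<in>{0..}. norm (y - t) < d \<longrightarrow>
        norm (X y - X t - (y - t) *\<^sub>R D t) \<le> e * norm (y - t)"
      by (simp add: has_derivative_within_alt)
    then obtain d where d: "d > 0" "\<And>y. y \<in> {0..} \<Longrightarrow> norm (y - t) < d \<Longrightarrow>
        norm (X y - X t - (y - t) *\<^sub>R D t) \<le> \<eta> * norm (y - t)"
      using \<eta>p by metis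
    define h0 where "h0 = min d (e / (2*M+1))"
    show ?thesis
    proof (intro exI[of _ h0] conjI allI impI)
      show "h0 > 0" unfolding h0_def using d e M0 by simp
      fix h assume h: "0 < h \<and> h < h0"
      define E where "E = X (t+h) - X t - h *\<^sub>R D t"
      have En: "norm E \<le> \<eta> * h" using d(2)[of "t+h"] t h unfolding E_def h0_def by simp
      have Eq: "\<bar>E q\<bar> \<le> \<eta> * h" for q using norm_bounded[of E q] En by simp
      have Xs: "X (t+h) q = X t q + h * D t q + E q" for q unfolding E_def by simp
      define k where "k = h / e"
      have k0: "k \<ge> 0" unfolding k_def using h e by simp
      have kM: "k * (2*M) \<le> 1"
      proof -
        have "h * (2*M+1) \<le> e" using h e M0 unfolding h0_def by (simp add: field_simps)
        then show ?thesis unfolding k_def using e M0 h by (simp add: field_simps)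
      qed
      define g1 where "g1 q = \<bar>X t q\<bar> * max 0 (u t q)" for q
      define g2 where "g2 q = \<bar>X t q\<bar> * max 0 (- u t q)" for q
      define g3 where "g3 q = \<bar>X t q\<bar> * max 0 (v t q)" for q
      define g4 where "g4 q = \<bar>X t q\<bar> * max 0 (- v t q)" for q
      define A where "A p = \<bar>X t p\<bar>" for p
      define Cc where "Cc p = g1 p + g2 p + g3 p + g4 p" for p
      define S1 where "S1 p = g1 (fst p + -e, snd p)" for p
      define S2 where "S2 p = g2 (fst p + e, snd p)" for p
      define S3 where "S3 p = g3 (fst p, snd p + -e)" for p
      define S4 where "S4 p = g4 (fst p, snd p + e)" for p
      define F where "F p = A p - k * Cc p + k * (S1 p + S2 p + S3 p + S4 p) + \<eta>*h" for p
      have cg: "continuous_on UNIV g1" "continuous_on UNIV g2" "continuous_on UNIV g3" "continuous_on UNIV g4"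
        unfolding g1_def g2_def g3_def g4_def by (intro continuous_intros)+
      have cA: "continuous_on UNIV A" unfolding A_def by (intro continuous_intros)
      have cC: "continuous_on UNIV Cc" unfolding Cc_def using cg by (intro continuous_intros)
      have cS: "continuous_on UNIV S1" "continuous_on UNIV S2" "continuous_on UNIV S3" "continuous_on UNIV S4"
        unfolding S1_def S2_def S3_def S4_def
        by (intro continuous_on_compose2[OF cg(1)] continuous_on_compose2[OF cg(2)]
            continuous_on_compose2[OF cg(3)] continuous_on_compose2[OF cg(4)] continuous_intros; simp)+
      have cF: "continuous_on UNIV F" unfolding F_def using cA cC cS by (intro continuous_intros)
      have ptw: "\<bar>X (t+h) p\<bar> \<le> F p" for p
      proof -
        obtain x y where p: "p = (x,y)" by fastforce
        have Mb: "\<bar>u t q\<bar> \<le> M" "\<bar>v t q\<bar> \<le> M" for q using M t by (cases q; auto)+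
        define Z where "Z = X t (x - e, y) * max 0 (u t (x - e, y)) - X t (x, y) * \<bar>u t (x, y)\<bar>
          + X t (x + e, y) * max 0 (- u t (x + e, y)) + X t (x, y - e) * max 0 (v t (x, y - e))
          - X t (x, y) * \<bar>v t (x, y)\<bar> + X t (x, y + e) * max 0 (- v t (x, y + e))"
        have hD: "h * D t (x,y) = k * Z" unfolding Deq[rule_format, OF t] Z_def k_def by simp
        define w where "w = 1 - k * (\<bar>u t (x,y)\<bar> + \<bar>v t (x,y)\<bar>)"
        have w0: "w \<ge> 0"
        proof -
          have "k * (\<bar>u t (x,y)\<bar> + \<bar>v t (x,y)\<bar>) \<le> k * (2*M)"
            using k0 Mb[of "(x,y)"] by (intro mult_left_mono) auto
          then show ?thesis unfolding w_def using kM by simp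
        qed
        have eq1: "X t (x,y) + h * D t (x,y) = X t (x,y) * w + k * (
            X t (x - e, y) * max 0 (u t (x - e, y)) + X t (x + e, y) * max 0 (- u t (x + e, y))
            + X t (x, y - e) * max 0 (v t (x, y - e)) + X t (x, y + e) * max 0 (- v t (x, y + e)))"
          unfolding hD Z_def w_def by (simp add: algebra_simps)
        have "\<bar>X t (x,y) + h * D t (x,y)\<bar> \<le> \<bar>X t (x,y)\<bar> * w + k * (
            \<bar>X t (x - e, y)\<bar> * max 0 (u t (x - e, y)) + \<bar>X t (x + e, y)\<bar> * max 0 (- u t (x + e, y))
            + \<bar>X t (x, y - e)\<bar> * max 0 (v t (x, y - e)) + \<bar>X t (x, y + e)\<bar> * max 0 (- v t (x, y + e)))"
          unfolding eq1 by (rule tri4) (use w0 k0 in auto)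
        also have "\<dots> = A p - k * Cc p + k * (S1 p + S2 p + S3 p + S4 p)"
          unfolding p A_def Cc_def S1_def S2_def S3_def S4_def g1_def g2_def g3_def g4_def w_def
          by (simp add: algebra_simps abs_real_def max_def)
        finally have "\<bar>X t (x,y) + h * D t (x,y)\<bar> \<le> A p - k * Cc p + k * (S1 p + S2 p + S3 p + S4 p)" .
        moreover have "X (t+h) (x,y) = (X t (x,y) + h * D t (x,y)) + E (x,y)" unfolding Xs by simp
        ultimately show ?thesis using Eq[of "(x,y)"] unfolding p F_def by (smt (verit))
      qed
      have iA: "A integrable_on Q" unfolding Q_def by (rule intQ[OF cA])
      have iC: "Cc integrable_on Q" unfolding Q_def by (rule intQ[OF cC])
      have iS: "S1 integrable_on Q" "S2 integrable_on Q" "S3 integrable_on Q" "S4 integrable_on Q"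
        unfolding Q_def by (rule intQ[OF cS(1)] intQ[OF cS(2)] intQ[OF cS(3)] intQ[OF cS(4)])+
      have ig: "g1 integrable_on Q" "g2 integrable_on Q" "g3 integrable_on Q" "g4 integrable_on Q"
        unfolding Q_def by (rule intQ[OF cg(1)] intQ[OF cg(2)] intQ[OF cg(3)] intQ[OF cg(4)])+
      have iK: "(\<lambda>p. \<eta>*h) integrable_on Q" unfolding Q_def by (intro intQ continuous_intros)
      have iF: "F integrable_on Q" unfolding Q_def by (rule intQ[OF cF])
      have Flam: "F = (\<lambda>p. A p - k * Cc p + k * (S1 p + S2 p + S3 p + S4 p) + \<eta>*h)"
        by (rule ext) (simp add: F_def)
      have hi: "(F has_integral (integral Q A - k * integral Q Cc + k * (integral Q S1 + integral Q S2
           + integral Q S3 + integral Q S4) + integral Q (\<lambda>p. \<eta>*h))) Q"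
        unfolding Flam
        by (intro has_integral_add has_integral_diff has_integral_mult_right integrable_integral iA iC iS iK)
      have Clam: "Cc = (\<lambda>p. g1 p + g2 p + g3 p + g4 p)" by (rule ext) (simp add: Cc_def)
      have hC: "(Cc has_integral (integral Q g1 + integral Q g2 + integral Q g3 + integral Q g4)) Q"
        unfolding Clam by (intro has_integral_add integrable_integral ig)
      have pg: "g1 (x + 2*pi, y) = g1 (x,y)" "g2 (x + 2*pi, y) = g2 (x,y)"
         "g3 (x, y + 2*pi) = g3 (x,y)" "g4 (x, y + 2*pi) = g4 (x,y)" for x y
        unfolding g1_def g2_def g3_def g4_def using pX pu t by auto
      have ce: "\<bar>-e\<bar> \<le> 2*pi" "\<bar>e\<bar> \<le> 2*pi" using e pi_gt3 by auto
      have sh: "integral Q S1 = integral Q g1" "integral Q S2 = integral Q g2"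
          "integral Q S3 = integral Q g3" "integral Q S4 = integral Q g4"
      proof -
        have "S1 = (\<lambda>p. g1 (fst p + -e, snd p))" by (rule ext) (simp add: S1_def)
        then show "integral Q S1 = integral Q g1" unfolding Q_def using shift_x[OF cg(1) pg(1) ce(1)] by simp
        have "S2 = (\<lambda>p. g2 (fst p + e, snd p))" by (rule ext) (simp add: S2_def)
        then show "integral Q S2 = integral Q g2" unfolding Q_def using shift_x[OF cg(2) pg(2) ce(2)] by simp
        have "S3 = (\<lambda>p. g3 (fst p, snd p + -e))" by (rule ext) (simp add: S3_def)
        then show "integral Q S3 = integral Q g3" unfolding Q_def using shift_y[OF cg(3) pg(3) ce(1)] by simp
        have "S4 = (\<lambda>p. g4 (fst p, snd p + e))" by (rule ext) (simp add: S4_def)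
        then show "integral Q S4 = integral Q g4" unfolding Q_def using shift_y[OF cg(4) pg(4) ce(2)] by simp
      qed
      have cst: "integral Q (\<lambda>p. \<eta>*h) = \<delta> * h" unfolding Q_def intQ_const \<eta>_def by simp
      have "integral Q F = integral Q A + \<delta> * h"
        using integral_unique[OF hi] integral_unique[OF hC] sh cst by simp
      moreover have "integral Q (\<lambda>p. \<bar>X (t+h) p\<bar>) \<le> integral Q F"
        by (rule integral_le) (use ptw iF in \<open>auto simp: Q_def intro!: intQ continuous_intros\<close>)
      ultimately show "L1 (X (t + h)) \<le> L1 (X t) + \<delta> * h"
        unfolding L1_def Q_def[symmetric] A_def[abs_def] by simp
    qed
  qed
  show ?thesis
    using dini_mono[OF \<phi>c dini] by auto
qed

theorem lemma4:
  fixes u v X D :: "real \<Rightarrow> real \<Rightarrow> (real \<times> real) \<Rightarrow>\<^sub>C real"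
    and rho0 :: "real \<Rightarrow> (real \<times> real) \<Rightarrow>\<^sub>C real"
  assumes per_uv: "\<forall>\<epsilon>\<in>{0<..<1}. \<forall>t\<ge>0. \<forall>x y.
      apply_bcontfun (u \<epsilon> t) (x + 2*pi, y) = apply_bcontfun (u \<epsilon> t) (x, y) \<and>
      apply_bcontfun (u \<epsilon> t) (x, y + 2*pi) = apply_bcontfun (u \<epsilon> t) (x, y) \<and>
      apply_bcontfun (v \<epsilon> t) (x + 2*pi, y) = apply_bcontfun (v \<epsilon> t) (x, y) \<and>
      apply_bcontfun (v \<epsilon> t) (x, y + 2*pi) = apply_bcontfun (v \<epsilon> t) (x, y)"
    and cont_uv: "\<forall>\<epsilon>\<in>{0<..<1}. continuous_on {0..} (u \<epsilon>) \<and> continuous_on {0..} (v \<epsilon>)"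
    and bnd_uv: "\<exists>M. \<forall>\<epsilon>\<in>{0<..<1}. \<forall>t\<ge>0. \<forall>x y.
      \<bar>apply_bcontfun (u \<epsilon> t) (x, y)\<bar> \<le> M \<and> \<bar>apply_bcontfun (v \<epsilon> t) (x, y)\<bar> \<le> M"
    and per_rho: "\<forall>\<epsilon>\<in>{0<..<1}. \<forall>x y.
      apply_bcontfun (rho0 \<epsilon>) (x + 2*pi, y) = apply_bcontfun (rho0 \<epsilon>) (x, y) \<and>
      apply_bcontfun (rho0 \<epsilon>) (x, y + 2*pi) = apply_bcontfun (rho0 \<epsilon>) (x, y)"
    and bnd_rho: "\<exists>B. \<forall>\<epsilon>\<in>{0<..<1}.
      integral ({-pi..pi} \<times> {-pi..pi}) (\<lambda>p. \<bar>apply_bcontfun (rho0 \<epsilon>) p\<bar>) \<le> B"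
    and X_init: "\<forall>\<epsilon>\<in>{0<..<1}. X \<epsilon> 0 = rho0 \<epsilon>"
    and X_deriv: "\<forall>\<epsilon>\<in>{0<..<1}. \<forall>t\<ge>0.
      (X \<epsilon> has_vector_derivative D \<epsilon> t) (at t within {0..})"
    and D_cont: "\<forall>\<epsilon>\<in>{0<..<1}. continuous_on {0..} (D \<epsilon>)"
    and D_eq: "\<forall>\<epsilon>\<in>{0<..<1}. \<forall>t\<ge>0. \<forall>x y.
      apply_bcontfun (D \<epsilon> t) (x, y) = (1/\<epsilon>) *
        ( apply_bcontfun (X \<epsilon> t) (x - \<epsilon>, y) * max 0 (apply_bcontfun (u \<epsilon> t) (x - \<epsilon>, y))
        - apply_bcontfun (X \<epsilon> t) (x, y) * \<bar>apply_bcontfun (u \<epsilon> t) (x, y)\<bar>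
        + apply_bcontfun (X \<epsilon> t) (x + \<epsilon>, y) * max 0 (- apply_bcontfun (u \<epsilon> t) (x + \<epsilon>, y))
        + apply_bcontfun (X \<epsilon> t) (x, y - \<epsilon>) * max 0 (apply_bcontfun (v \<epsilon> t) (x, y - \<epsilon>))
        - apply_bcontfun (X \<epsilon> t) (x, y) * \<bar>apply_bcontfun (v \<epsilon> t) (x, y)\<bar>
        + apply_bcontfun (X \<epsilon> t) (x, y + \<epsilon>) * max 0 (- apply_bcontfun (v \<epsilon> t) (x, y + \<epsilon>)))"
  shows "\<exists>C. \<forall>\<epsilon>\<in>{0<..<1}. \<forall>t\<ge>0.
      integral ({-pi..pi} \<times> {-pi..pi}) (\<lambda>p. \<bar>apply_bcontfun (X \<epsilon> t) p\<bar>)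
        \<le> integral ({-pi..pi} \<times> {-pi..pi}) (\<lambda>p. \<bar>apply_bcontfun (rho0 \<epsilon>) p\<bar>) \<and>
      integral ({-pi..pi} \<times> {-pi..pi}) (\<lambda>p. \<bar>apply_bcontfun (rho0 \<epsilon>) p\<bar>) \<le> C"
  proof -
  obtain M where M: "\<forall>\<epsilon>\<in>{0<..<1}. \<forall>t\<ge>0. \<forall>x y.
      \<bar>apply_bcontfun (u \<epsilon> t) (x, y)\<bar> \<le> M \<and> \<bar>apply_bcontfun (v \<epsilon> t) (x, y)\<bar> \<le> M"
    using bnd_uv by blast
  obtain B where B: "\<forall>\<epsilon>\<in>{0<..<1}.
      integral ({-pi..pi} \<times> {-pi..pi}) (\<lambda>p. \<bar>apply_bcontfun (rho0 \<epsilon>) p\<bar>) \<le> B"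
    using bnd_rho by blast
  have main: "L1 (X \<epsilon> t) \<le> L1 (rho0 \<epsilon>)" if ep: "\<epsilon> \<in> {0<..<1}" and t: "t \<ge> 0" for \<epsilon> t
  proof -
    have e: "0 < \<epsilon>" "\<epsilon> < 1" using ep by auto
    have Mb: "\<forall>t\<ge>0. \<forall>x y. \<bar>u \<epsilon> t (x,y)\<bar> \<le> M \<and> \<bar>v \<epsilon> t (x,y)\<bar> \<le> M"
      using M ep by blast
    have Xd: "\<forall>t\<ge>0. (X \<epsilon> has_vector_derivative D \<epsilon> t) (at t within {0..})" using X_deriv ep by blast
    have Deq: "\<forall>t\<ge>0. \<forall>x y.
      apply_bcontfun (D \<epsilon> t) (x, y) = (1/\<epsilon>) *
        ( apply_bcontfun (X \<epsilon> t) (x - \<epsilon>, y) * max 0 (apply_bcontfun (u \<epsilon> t) (x - \<epsilon>, y))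
        - apply_bcontfun (X \<epsilon> t) (x, y) * \<bar>apply_bcontfun (u \<epsilon> t) (x, y)\<bar>
        + apply_bcontfun (X \<epsilon> t) (x + \<epsilon>, y) * max 0 (- apply_bcontfun (u \<epsilon> t) (x + \<epsilon>, y))
        + apply_bcontfun (X \<epsilon> t) (x, y - \<epsilon>) * max 0 (apply_bcontfun (v \<epsilon> t) (x, y - \<epsilon>))
        - apply_bcontfun (X \<epsilon> t) (x, y) * \<bar>apply_bcontfun (v \<epsilon> t) (x, y)\<bar>
        + apply_bcontfun (X \<epsilon> t) (x, y + \<epsilon>) * max 0 (- apply_bcontfun (v \<epsilon> t) (x, y + \<epsilon>)))"
      using D_eq ep by blast
    have X0: "X \<epsilon> 0 = rho0 \<epsilon>" using X_init ep by blast
    have pu1: "\<forall>t\<ge>0. \<forall>x y. u \<epsilon> t (x + fst (2*pi,0::real), y + snd (2*pi,0::real)) = u \<epsilon> t (x,y)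
       \<and> v \<epsilon> t (x + fst (2*pi,0::real), y + snd (2*pi,0::real)) = v \<epsilon> t (x,y)"
      using per_uv ep by auto
    have pr1: "\<forall>x y. rho0 \<epsilon> (x + fst (2*pi,0::real), y + snd (2*pi,0::real)) = rho0 \<epsilon> (x,y)"
      using per_rho ep by auto
    have pu2: "\<forall>t\<ge>0. \<forall>x y. u \<epsilon> t (x + fst (0::real,2*pi), y + snd (0::real,2*pi)) = u \<epsilon> t (x,y)
       \<and> v \<epsilon> t (x + fst (0::real,2*pi), y + snd (0::real,2*pi)) = v \<epsilon> t (x,y)"
      using per_uv ep by auto
    have pr2: "\<forall>x y. rho0 \<epsilon> (x + fst (0::real,2*pi), y + snd (0::real,2*pi)) = rho0 \<epsilon> (x,y)"
      using per_rho ep by auto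
    note px = X_periodic[OF e(1) Mb pu1 pr1 X0 Xd Deq]
    note py = X_periodic[OF e(1) Mb pu2 pr2 X0 Xd Deq]
    have "\<forall>t\<ge>0. L1 (X \<epsilon> t) \<le> L1 (X \<epsilon> 0)"
      by (rule L1_mono[OF e Mb _ _ Xd Deq]) (use per_uv px py ep in auto)
    then show ?thesis using t X0 by simp
  qed
  show ?thesis
    by (rule exI[of _ B]) (use main B in \<open>auto simp: L1_def\<close>)
qed

end
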